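(* Let $k\ge 2$, let $H_0$ be a finite $k$-uniform hypergraph and let $(H_t)_{t\ge0}$ be the ILTH hypergraphs generated from $H_0$. Let $(a,b,c,d,e,f,g)$ be a 7-tuple of nonnegative integers and $t\ge 0$. If $H_t$ contains $x$ motifs with cardinality vector $(a,b,c,d,e,f,g)$, then $H_{t+1}$ contains at least $$x\big(g+(c+1)d+(b+1)f+(a+1)e+(a+1)(b+1)(c+1)\big)$$ motifs with cardinality vector $(a,b,c,d,e,f,g)$ (and hence of the same motif type).
   Context: A $k$-uniform hypergraph has every hyperedge a $k$-element subset of the vertex set. The ILTH process: given $H_t$, form $H_{t+1}$ by adding for each vertex $x\in V(H_t)$ a new vertex $x'$ (its clone), and taking $E(H_{t+1})=E(H_t)\cup\{(e\setminus\{x\})\cup\{x'\} : e\in E(H_t),\ x\in e\}$. A motif is given by three distinct hyperedges $e_1,e_2,e_3$ (ordered); its cardinality vector is $(|e_1\setminus(e_2\cup e_3)|,\ |e_2\setminus(e_1\cup e_3)|,\ |e_3\setminus(e_1\cup e_2)|,\ |(e_1\cap e_2)\setminus e_3|,\ |(e_2\cap e_3)\setminus e_1|,\ |(e_1\cap e_3)\setminus e_2|,\ |e_1\cap e_2\cap e_3|)$. Its motif type is the binary string recording which of these seven regions are nonempty, considered up to relabelling of $e_1,e_2,e_3$. *)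

theory Defs
  imports Main
begin

text \<open>Vertices of the ILTH hypergraphs: the vertices of H_0 are tagged Base,
  and the clone of vertex x created in step t (passing from H_t to H_(t+1)) is Cl t x,
  which is guaranteed to be a fresh vertex.\<close>
datatype 'a vtx = Base 'a | Cl nat "'a vtx"

type_synonym 'v hypergraph = "'v set \<times> 'v set set"

definition verts :: "'v hypergraph \<Rightarrow> 'v set" where "verts H = fst H"
definition hedges :: "'v hypergraph \<Rightarrow> 'v set set" where "hedges H = snd H"

definition k_uniform :: "nat \<Rightarrow> 'v hypergraph \<Rightarrow> bool" where
  "k_uniform k H \<longleftrightarrow> (\<forall>e\<in>hedges H. e \<subseteq> verts H \<and> card e = k)"

definition finite_hypergraph :: "'v hypergraph \<Rightarrow> bool" where
  "finite_hypergraph H \<longleftrightarrow> finite (verts H) \<and> finite (hedges H)"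

definition ilth_step :: "nat \<Rightarrow> 'a vtx hypergraph \<Rightarrow> 'a vtx hypergraph" where
  "ilth_step t H =
     (verts H \<union> Cl t ` verts H,
      hedges H \<union> {insert (Cl t x) (e - {x}) | e x. e \<in> hedges H \<and> x \<in> e})"

fun ilth :: "'a hypergraph \<Rightarrow> nat \<Rightarrow> 'a vtx hypergraph" where
  "ilth H0 0 = (Base ` verts H0, (\<lambda>e. Base ` e) ` hedges H0)"
| "ilth H0 (Suc t) = ilth_step t (ilth H0 t)"

definition card_vec :: "'v set \<Rightarrow> 'v set \<Rightarrow> 'v set \<Rightarrow> nat \<times> nat \<times> nat \<times> nat \<times> nat \<times> nat \<times> nat" where
  "card_vec e1 e2 e3 =
     (card (e1 - (e2 \<union> e3)), card (e2 - (e1 \<union> e3)), card (e3 - (e1 \<union> e2)),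
      card ((e1 \<inter> e2) - e3), card ((e2 \<inter> e3) - e1), card ((e1 \<inter> e3) - e2),
      card (e1 \<inter> e2 \<inter> e3))"

definition motifs :: "'v hypergraph \<Rightarrow> ('v set \<times> 'v set \<times> 'v set) set" where
  "motifs H = {(e1, e2, e3). e1 \<in> hedges H \<and> e2 \<in> hedges H \<and> e3 \<in> hedges H \<and>
                 e1 \<noteq> e2 \<and> e2 \<noteq> e3 \<and> e1 \<noteq> e3}"

definition motif_count :: "'v hypergraph \<Rightarrow> nat \<times> nat \<times> nat \<times> nat \<times> nat \<times> nat \<times> nat \<Rightarrow> nat" where
  "motif_count H cv = card {(e1, e2, e3) \<in> motifs H. card_vec e1 e2 e3 = cv}"

end

theory Submission
  imports Defs
begin

definition phi :: "nat \<Rightarrow> 'a vtx set \<Rightarrow> 'a vtx \<Rightarrow> 'a vtx" where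
  "phi t W u = (if u \<in> W then Cl t u else u)"

lemma phi_inj: assumes "\<forall>w. Cl t w \<notin> A" shows "inj_on (phi t W) A"
  unfolding inj_on_def phi_def using assms by auto

lemma phi_recW: assumes "\<forall>w. Cl t w \<notin> A"
  shows "W \<inter> A = {u. Cl t u \<in> phi t W ` A}"
  using assms unfolding phi_def by (auto split: if_splits)

lemma phi_recA: assumes "\<forall>w. Cl t w \<notin> A"
  shows "A = {u. u \<in> phi t W ` A \<and> u \<notin> range (Cl t)} \<union> {u. Cl t u \<in> phi t W ` A}"
  using assms unfolding phi_def by (auto split: if_splits)

lemma phi_img_inj:
  assumes "\<forall>w. Cl t w \<notin> A" "\<forall>w. Cl t w \<notin> B" "phi t W ` A = phi t W' ` B"
  shows "A = B \<and> W \<inter> A = W' \<inter> B"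
proof -
  have "A = B" using phi_recA[OF assms(1), of W] phi_recA[OF assms(2), of W'] assms(3) by simp
  moreover have "W \<inter> A = W' \<inter> B"
    using phi_recW[OF assms(1), of W] phi_recW[OF assms(2), of W'] assms(3) by simp
  ultimately show ?thesis by simp
qed

lemma phi_none: "W \<inter> e = {} \<Longrightarrow> phi t W ` e = e"
  unfolding phi_def by (auto simp: image_iff)

lemma phi_some: "W \<inter> e = {v} \<Longrightarrow> phi t W ` e = insert (Cl t v) (e - {v})"
  unfolding phi_def by (auto simp: image_iff)

lemma card_vec_inj:
  assumes "inj_on h (e1 \<union> e2 \<union> e3)"
  shows "card_vec (h ` e1) (h ` e2) (h ` e3) = card_vec e1 e2 e3"
proof -
  have i: "inj_on h X" if "X \<subseteq> e1 \<union> e2 \<union> e3" for X using assms inj_on_subset that by blast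
  have 1: "h ` e1 - (h ` e2 \<union> h ` e3) = h ` (e1 - (e2 \<union> e3))"
    using assms unfolding inj_on_def by blast
  have 2: "h ` e2 - (h ` e1 \<union> h ` e3) = h ` (e2 - (e1 \<union> e3))"
    using assms unfolding inj_on_def by blast
  have 3: "h ` e3 - (h ` e1 \<union> h ` e2) = h ` (e3 - (e1 \<union> e2))"
    using assms unfolding inj_on_def by blast
  have 4: "(h ` e1 \<inter> h ` e2) - h ` e3 = h ` ((e1 \<inter> e2) - e3)"
    using assms unfolding inj_on_def by blast
  have 5: "(h ` e2 \<inter> h ` e3) - h ` e1 = h ` ((e2 \<inter> e3) - e1)"
    using assms unfolding inj_on_def by blast
  have 6: "(h ` e1 \<inter> h ` e3) - h ` e2 = h ` ((e1 \<inter> e3) - e2)"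
    using assms unfolding inj_on_def by blast
  have 7: "h ` e1 \<inter> h ` e2 \<inter> h ` e3 = h ` (e1 \<inter> e2 \<inter> e3)"
    using assms unfolding inj_on_def by blast
  show ?thesis unfolding card_vec_def 1 2 3 4 5 6 7
    by (subst card_image, rule i, blast)+ simp
qed

definition Opt :: "'v set \<Rightarrow> 'v option set" where "Opt A = insert None (Some ` A)"

lemma card_Opt: "finite A \<Longrightarrow> card (Opt A) = card A + 1"
  unfolding Opt_def by (simp add: card_image)

lemma finite_Opt: "finite A \<Longrightarrow> finite (Opt A)"
  unfolding Opt_def by simp

definition choices :: "'v set \<Rightarrow> 'v set \<Rightarrow> 'v set \<Rightarrow> ('v option \<times> 'v option \<times> 'v option) set" where
 "choices e1 e2 e3 =
   (\<lambda>v. (Some v, Some v, Some v)) ` (e1 \<inter> e2 \<inter> e3) \<union>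
   ((\<lambda>(v,q). (Some v, Some v, q)) ` (((e1 \<inter> e2) - e3) \<times> Opt (e3 - (e1 \<union> e2))) \<union>
   ((\<lambda>(v,q). (Some v, q, Some v)) ` (((e1 \<inter> e3) - e2) \<times> Opt (e2 - (e1 \<union> e3))) \<union>
   ((\<lambda>(v,q). (q, Some v, Some v)) ` (((e2 \<inter> e3) - e1) \<times> Opt (e1 - (e2 \<union> e3))) \<union>
   Opt (e1 - (e2 \<union> e3)) \<times> Opt (e2 - (e1 \<union> e3)) \<times> Opt (e3 - (e1 \<union> e2)))))"

lemma choices_valid:
  assumes "(q1, q2, q3) \<in> choices e1 e2 e3"
  shows "(set_option q1 \<union> set_option q2 \<union> set_option q3) \<inter> e1 = set_option q1 \<and>
         (set_option q1 \<union> set_option q2 \<union> set_option q3) \<inter> e2 = set_option q2 \<and>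
         (set_option q1 \<union> set_option q2 \<union> set_option q3) \<inter> e3 = set_option q3"
  using assms unfolding choices_def Opt_def by auto

definition Ncount :: "nat \<times> nat \<times> nat \<times> nat \<times> nat \<times> nat \<times> nat \<Rightarrow> nat" where
  "Ncount cv = (case cv of (a,b,c,d,e,f,g) \<Rightarrow>
     g + (c + 1) * d + (b + 1) * f + (a + 1) * e + (a + 1) * (b + 1) * (c + 1))"

lemma card_choices:
  assumes "finite e1" "finite e2" "finite e3"
  shows "card (choices e1 e2 e3) = Ncount (card_vec e1 e2 e3)"
proof -
  define G where "G = (\<lambda>v. (Some v, Some v, Some v)) ` (e1 \<inter> e2 \<inter> e3)"
  define D where "D = (\<lambda>(v,q). (Some v, Some v, q)) ` (((e1 \<inter> e2) - e3) \<times> Opt (e3 - (e1 \<union> e2)))"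
  define F where "F = (\<lambda>(v,q). (Some v, q, Some v)) ` (((e1 \<inter> e3) - e2) \<times> Opt (e2 - (e1 \<union> e3)))"
  define E where "E = (\<lambda>(v,q). (q, Some v, Some v)) ` (((e2 \<inter> e3) - e1) \<times> Opt (e1 - (e2 \<union> e3)))"
  define P where "P = Opt (e1 - (e2 \<union> e3)) \<times> Opt (e2 - (e1 \<union> e3)) \<times> Opt (e3 - (e1 \<union> e2))"
  have ch: "choices e1 e2 e3 = G \<union> (D \<union> (F \<union> (E \<union> P)))"
    unfolding choices_def G_def D_def F_def E_def P_def by simp
  have fins: "finite G" "finite D" "finite F" "finite E" "finite P"
    unfolding G_def D_def F_def E_def P_def using assms by (auto intro!: finite_Opt)
  have cG: "card G = card (e1 \<inter> e2 \<inter> e3)"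
    unfolding G_def by (rule card_image) (auto simp: inj_on_def)
  have cD: "card D = card ((e1 \<inter> e2) - e3) * (card (e3 - (e1 \<union> e2)) + 1)"
    unfolding D_def
    by (subst card_image) (auto simp: inj_on_def card_cartesian_product card_Opt assms)
  have cF: "card F = card ((e1 \<inter> e3) - e2) * (card (e2 - (e1 \<union> e3)) + 1)"
    unfolding F_def
    by (subst card_image) (auto simp: inj_on_def card_cartesian_product card_Opt assms)
  have cE: "card E = card ((e2 \<inter> e3) - e1) * (card (e1 - (e2 \<union> e3)) + 1)"
    unfolding E_def
    by (subst card_image) (auto simp: inj_on_def card_cartesian_product card_Opt assms)
  have cP: "card P = (card (e1 - (e2 \<union> e3)) + 1) * (card (e2 - (e1 \<union> e3)) + 1) * (card (e3 - (e1 \<union> e2)) + 1)"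
    unfolding P_def by (simp add: card_cartesian_product card_Opt assms algebra_simps)
  have d1: "E \<inter> P = {}" unfolding E_def P_def Opt_def by auto
  have d2: "F \<inter> (E \<union> P) = {}" unfolding F_def E_def P_def Opt_def by auto
  have d3: "D \<inter> (F \<union> (E \<union> P)) = {}" unfolding D_def F_def E_def P_def Opt_def by auto
  have d4: "G \<inter> (D \<union> (F \<union> (E \<union> P))) = {}" unfolding G_def D_def F_def E_def P_def Opt_def by auto
  have "card (choices e1 e2 e3) = card G + (card D + (card F + (card E + card P)))"
    unfolding ch using fins d1 d2 d3 d4 by (simp add: card_Un_disjoint)
  then show ?thesis unfolding cG cD cF cE cP Ncount_def card_vec_def by (simp add: algebra_simps)
qed

lemma set_option_inj: "set_option a = set_option b \<Longrightarrow> a = b"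
  by (cases a; cases b) auto

lemma step_hedges_finite:
  assumes "finite (hedges H)" "\<forall>e\<in>hedges H. finite e"
  shows "finite (hedges (ilth_step t H))"
proof -
  have "{insert (Cl t x) (e - {x}) | e x. e \<in> hedges H \<and> x \<in> e}
        = (\<lambda>(e, x). insert (Cl t x) (e - {x})) ` Sigma (hedges H) (\<lambda>e. e)" by auto
  moreover have "finite (Sigma (hedges H) (\<lambda>e. e))" using assms by auto
  ultimately show ?thesis unfolding ilth_step_def hedges_def using assms(1)
    by (simp add: hedges_def)
qed

definition newm :: "nat \<Rightarrow> ('a vtx set \<times> 'a vtx set \<times> 'a vtx set)
   \<Rightarrow> ('a vtx option \<times> 'a vtx option \<times> 'a vtx option) \<Rightarrow> ('a vtx set \<times> 'a vtx set \<times> 'a vtx set)" where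
  "newm t m q = (let W = set_option (fst q) \<union> set_option (fst (snd q)) \<union> set_option (snd (snd q))
     in (phi t W ` fst m, phi t W ` fst (snd m), phi t W ` snd (snd m)))"

definition CH :: "('v set \<times> 'v set \<times> 'v set) \<Rightarrow> ('v option \<times> 'v option \<times> 'v option) set" where
  "CH m = choices (fst m) (fst (snd m)) (snd (snd m))"

lemma edge_in:
  assumes "e \<in> hedges H" "W \<inter> e = set_option q"
  shows "phi t W ` e \<in> hedges (ilth_step t H)"
proof (cases q)
  case None
  then show ?thesis using assms phi_none[of W e t] by (simp add: ilth_step_def hedges_def)
next
  case (Some v)
  then have "phi t W ` e = insert (Cl t v) (e - {v})" "v \<in> e" using assms phi_some[of W e v t] by auto
  then show ?thesis using assms(1) by (auto simp: ilth_step_def hedges_def)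
qed

lemma step_bound:
  fixes H :: "'a vtx hypergraph"
  assumes finE: "finite (hedges H)" and fin_e: "\<forall>e\<in>hedges H. finite e"
    and free: "\<forall>e\<in>hedges H. \<forall>w. Cl t w \<notin> e"
  shows "card {(e1,e2,e3) \<in> motifs H. card_vec e1 e2 e3 = cv} * Ncount cv
     \<le> card {(e1,e2,e3) \<in> motifs (ilth_step t H). card_vec e1 e2 e3 = cv}"
proof -
  define S where "S = {(e1,e2,e3) \<in> motifs H. card_vec e1 e2 e3 = cv}"
  define T where "T = {(e1,e2,e3) \<in> motifs (ilth_step t H). card_vec e1 e2 e3 = cv}"
  define Fm :: "('a vtx set \<times> 'a vtx set \<times> 'a vtx set) \<times> ('a vtx option \<times> 'a vtx option \<times> 'a vtx option) \<Rightarrow> _" where "Fm = (\<lambda>(m, q). newm t m q)"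
  have finS: "finite S"
    by (rule finite_subset[of _ "hedges H \<times> hedges H \<times> hedges H"])
       (auto simp: S_def motifs_def finE)
  have finT: "finite T"
    by (rule finite_subset[of _ "hedges (ilth_step t H) \<times> hedges (ilth_step t H) \<times> hedges (ilth_step t H)"])
       (auto simp: T_def motifs_def step_hedges_finite[OF finE fin_e])
  have mem: "Fm (m, q) \<in> T" if "m \<in> S" "q \<in> CH m" for m q
  proof -
    obtain e1 e2 e3 where m: "m = (e1, e2, e3)" by (cases m) auto
    obtain q1 q2 q3 where q: "q = (q1, q2, q3)" by (cases q) auto
    define W where "W = set_option q1 \<union> set_option q2 \<union> set_option q3"
    have e: "e1 \<in> hedges H" "e2 \<in> hedges H" "e3 \<in> hedges H" "e1 \<noteq> e2" "e2 \<noteq> e3" "e1 \<noteq> e3"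
      and cv: "card_vec e1 e2 e3 = cv"
      using that(1) by (auto simp: S_def motifs_def m)
    have v: "W \<inter> e1 = set_option q1" "W \<inter> e2 = set_option q2" "W \<inter> e3 = set_option q3"
      using choices_valid[of q1 q2 q3 e1 e2 e3] that(2) by (auto simp: CH_def m q W_def)
    have fr: "\<forall>w. Cl t w \<notin> e1 \<union> e2 \<union> e3" using free e by auto
    have inj: "inj_on (phi t W) (e1 \<union> e2 \<union> e3)" by (rule phi_inj[OF fr])
    have Fm: "Fm (m, q) = (phi t W ` e1, phi t W ` e2, phi t W ` e3)"
      by (simp add: Fm_def newm_def m q W_def Let_def)
    have ne: "phi t W ` e1 \<noteq> phi t W ` e2" "phi t W ` e2 \<noteq> phi t W ` e3" "phi t W ` e1 \<noteq> phi t W ` e3"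
      using inj_on_image_eq_iff[OF inj] e by auto
    show ?thesis unfolding Fm T_def motifs_def
      using edge_in[OF e(1) v(1)] edge_in[OF e(2) v(2)] edge_in[OF e(3) v(3)] ne
        card_vec_inj[OF inj] cv by simp
  qed
  have inj: "inj_on Fm (Sigma S CH)"
  proof (rule inj_onI)
    fix x y assume x: "x \<in> Sigma S CH" and y: "y \<in> Sigma S CH" and xy: "Fm x = Fm y"
    obtain e1 e2 e3 q1 q2 q3 where xe: "x = ((e1, e2, e3), (q1, q2, q3))" by (cases x) auto
    obtain e1' e2' e3' q1' q2' q3' where ye: "y = ((e1', e2', e3'), (q1', q2', q3'))" by (cases y) auto
    define W where "W = set_option q1 \<union> set_option q2 \<union> set_option q3"
    define W' where "W' = set_option q1' \<union> set_option q2' \<union> set_option q3'"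
    have e: "e1 \<in> hedges H" "e2 \<in> hedges H" "e3 \<in> hedges H"
      "e1' \<in> hedges H" "e2' \<in> hedges H" "e3' \<in> hedges H"
      using x y by (auto simp: S_def motifs_def xe ye)
    have v: "W \<inter> e1 = set_option q1" "W \<inter> e2 = set_option q2" "W \<inter> e3 = set_option q3"
      using choices_valid[of q1 q2 q3 e1 e2 e3] x by (auto simp: CH_def xe W_def)
    have v': "W' \<inter> e1' = set_option q1'" "W' \<inter> e2' = set_option q2'" "W' \<inter> e3' = set_option q3'"
      using choices_valid[of q1' q2' q3' e1' e2' e3'] y by (auto simp: CH_def ye W'_def)
    have eq: "phi t W ` e1 = phi t W' ` e1'" "phi t W ` e2 = phi t W' ` e2'" "phi t W ` e3 = phi t W' ` e3'"
      using xy by (simp_all add: Fm_def newm_def xe ye W_def W'_def Let_def)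
    have r1: "e1 = e1' \<and> W \<inter> e1 = W' \<inter> e1'" by (rule phi_img_inj) (use free e eq in auto)
    have r2: "e2 = e2' \<and> W \<inter> e2 = W' \<inter> e2'" by (rule phi_img_inj) (use free e eq in auto)
    have r3: "e3 = e3' \<and> W \<inter> e3 = W' \<inter> e3'" by (rule phi_img_inj) (use free e eq in auto)
    have "q1 = q1'" "q2 = q2'" "q3 = q3'" using r1 r2 r3 v v' set_option_inj by metis+
    then show "x = y" using r1 r2 r3 xe ye by simp
  qed
  have cCH: "card (CH m) = Ncount cv" if "m \<in> S" for m
  proof -
    obtain e1 e2 e3 where m: "m = (e1, e2, e3)" by (cases m) auto
    have "e1 \<in> hedges H" "e2 \<in> hedges H" "e3 \<in> hedges H" "card_vec e1 e2 e3 = cv"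
      using that by (auto simp: S_def motifs_def m)
    then show ?thesis using card_choices[of e1 e2 e3] fin_e by (simp add: CH_def m)
  qed
  have finCH: "finite (CH m)" if "m \<in> S" for m
  proof -
    obtain e1 e2 e3 where m: "m = (e1, e2, e3)" by (cases m) auto
    have "e1 \<in> hedges H" "e2 \<in> hedges H" "e3 \<in> hedges H"
      using that by (auto simp: S_def motifs_def m)
    then show ?thesis using fin_e
      by (auto simp: CH_def m choices_def intro!: finite_Opt finite_imageI finite_cartesian_product)
  qed
  have cS: "card (Sigma S CH) = card S * Ncount cv"
    using finS finCH cCH by (simp add: card_SigmaI)
  have "card S * Ncount cv = card (Fm ` Sigma S CH)" using card_image[OF inj] cS by simp
  also have "\<dots> \<le> card T" by (rule card_mono[OF finT]) (use mem in auto)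
  finally show ?thesis unfolding S_def T_def .
qed

lemma ilth_inv:
  assumes "k \<ge> 2" "finite_hypergraph H0" "k_uniform k H0"
  shows "finite (hedges (ilth H0 t)) \<and> (\<forall>e\<in>hedges (ilth H0 t). finite e)
     \<and> (\<forall>e\<in>hedges (ilth H0 t). \<forall>s w. s \<ge> t \<longrightarrow> Cl s w \<notin> e)"
proof (induction t)
  case 0
  have "\<forall>e\<in>hedges H0. finite e"
    using assms unfolding k_uniform_def by (metis card.infinite not_numeral_le_zero)
  then show ?case using assms(2) by (auto simp: hedges_def finite_hypergraph_def)
next
  case (Suc t)
  then show ?case
    using step_hedges_finite[of "ilth H0 t" t]
    by (auto simp: ilth_step_def hedges_def)
qed

theorem lemma3p2:
  fixes k :: nat and H0 :: "'a hypergraph"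
    and a b c d e f g t x :: nat
  assumes "k \<ge> 2"
    and "finite_hypergraph H0"
    and "k_uniform k H0"
    and "motif_count (ilth H0 t) (a, b, c, d, e, f, g) = x"
  shows "motif_count (ilth H0 (Suc t)) (a, b, c, d, e, f, g)
           \<ge> x * (g + (c + 1) * d + (b + 1) * f + (a + 1) * e + (a + 1) * (b + 1) * (c + 1))"
proof -
  have I: "finite (hedges (ilth H0 t))" "\<forall>e\<in>hedges (ilth H0 t). finite e"
     "\<forall>e\<in>hedges (ilth H0 t). \<forall>w. Cl t w \<notin> e"
    using ilth_inv[OF assms(1-3), of t] by auto
  show ?thesis
    using step_bound[OF I, of "(a, b, c, d, e, f, g)"] assms(4)
    by (simp add: motif_count_def Ncount_def)
qed

end
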